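(* Let $\Theta$ be a causal theory over $\mathfrak L$. Every sequent derivable in the sequent calculus $\mathbf{S}_\Theta$ has a derivation in $\mathbf{S}_\Theta$ that does not use the multicut rule.
   Context: $\mathfrak L$ is a classical propositional language (atoms, $\neg,\wedge,\vee,\to,\top,\perp$). A causal rule is $\phi\triangleright\psi$ with $\phi,\psi\in\mathfrak L$; a causal theory $\Theta$ is a set of causal rules. $\mathcal L_\Box$ is generated by $\mathfrak L$ and a unary operator $\Box$. The sequent calculus $\mathbf S_\Theta$ derives sequents $\Gamma\vdash_\Box\Delta$ with $\Gamma,\Delta$ collections of $\mathcal L_\Box$-formulas; derivations are well-founded, possibly infinitely branching trees. Its rules: axiom $p\vdash_\Box p$; $\perp\vdash_\Box$; $\vdash_\Box\top$; left and right weakening and contraction; the classical two-sided rules: $\neg$L (from $\Gamma\vdash_\Box p,\Delta$ infer $\Gamma,\neg p\vdash_\Box\Delta$), $\neg$R (from $\Gamma,p\vdash_\Box\Delta$ infer $\Gamma\vdash_\Box\neg p,\Delta$), $\wedge$L (from $\Gamma,p,q\vdash_\Box\Delta$ infer $\Gamma,p\wedge q\vdash_\Box\Delta$), $\wedge$R (from $\Gamma\vdash_\Box p,\Delta$ and $\Gamma\vdash_\Box q,\Delta$ infer $\Gamma\vdash_\Box p\wedge q,\Delta$), $\vee$L (from $\Gamma,p\vdash_\Box\Delta$ and $\Gamma,q\vdash_\Box\Delta$ infer $\Gamma,p\vee q\vdash_\Box\Delta$), $\vee$R (from $\Gamma\vdash_\Box p,q,\Delta$ infer $\Gamma\vdash_\Box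 p\vee q,\Delta$), $\to$L (from $\Gamma\vdash_\Box p,\Delta$ and $\Gamma,q\vdash_\Box\Delta$ infer $\Gamma,p\to q\vdash_\Box\Delta$), $\to$R (from $\Gamma,p\vdash_\Box q,\Delta$ infer $\Gamma\vdash_\Box p\to q,\Delta$); $\Box$R: if $\phi_1\triangleright\psi_1,\dots,\phi_k\triangleright\psi_k\in\Theta$ and $\psi_1,\dots,\psi_k\vdash_\Box p$ is derivable, then from $\Gamma\vdash_\Box\phi_1\wedge\dots\wedge\phi_k,\Delta$ infer $\Gamma\vdash_\Box\Box p,\Delta$ (empty conjunction $=\top$); $\Box$L: letting $\{S_j\}_{j\in J}$ be the family of all finite sets $S_j\subseteq\Theta$ such that $\{\psi:\phi\triangleright\psi\in S_j\}\vdash_\Box p$ is derivable ($J$ may be infinite), from the premises $\Gamma,\{\phi:\phi\triangleright\psi\in S_j\}\vdash_\Box\Delta$ for all $j\in J$ infer $\Gamma,\Box p\vdash_\Box\Delta$; multicut: from $\Gamma\vdash_\Box p^m,\Delta$ and $\Gamma',p^n\vdash_\Box\Delta'$ ($m,n>0$, $p^n$ meaning $n$ occurrences of $p$) infer $\Gamma,\Gamma'\vdash_\Box\Delta,\Delta'$. *)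

theory Defs
  imports Main "HOL-Library.Multiset"
begin

datatype 'a fm =
    Atom 'a
  | Neg "'a fm"
  | Conj "'a fm" "'a fm"
  | Disj "'a fm" "'a fm"
  | Imp "'a fm" "'a fm"
  | Top
  | Bot
  | Box "'a fm"

fun classical :: "'a fm \<Rightarrow> bool" where
  "classical (Atom a) = True"
| "classical (Neg p) = classical p"
| "classical (Conj p q) = (classical p \<and> classical q)"
| "classical (Disj p q) = (classical p \<and> classical q)"
| "classical (Imp p q) = (classical p \<and> classical q)"
| "classical Top = True"
| "classical Bot = True"
| "classical (Box p) = False"

fun mdepth :: "'a fm \<Rightarrow> nat" where
  "mdepth (Atom a) = 0"
| "mdepth (Neg p) = mdepth p"
| "mdepth (Conj p q) = max (mdepth p) (mdepth q)"
| "mdepth (Disj p q) = max (mdepth p) (mdepth q)"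
| "mdepth (Imp p q) = max (mdepth p) (mdepth q)"
| "mdepth Top = 0"
| "mdepth Bot = 0"
| "mdepth (Box p) = Suc (mdepth p)"

text \<open>A causal rule phi |> psi is the pair (phi, psi); a causal theory is a set of
  such pairs with classical components.\<close>
type_synonym 'a crule = "'a fm \<times> 'a fm"

definition causal_theory :: "'a crule set \<Rightarrow> bool" where
  "causal_theory \<Theta> \<longleftrightarrow> (\<forall>(\<phi>, \<psi>) \<in> \<Theta>. classical \<phi> \<and> classical \<psi>)"

fun bigconj :: "'a fm list \<Rightarrow> 'a fm" where
  "bigconj [] = Top"
| "bigconj [p] = p"
| "bigconj (p # ps) = Conj p (bigconj ps)"

type_synonym 'a sequent = "'a fm multiset \<times> 'a fm multiset"

text \<open>Derivability in S_Theta, parametrised by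
  sc :  the side-condition relation (sc k s: sequent s derivable, used for Box-rules
        whose principal formula is Box p with mdepth p = k),
  ok :  which levels k = mdepth p of Box-rules may be applied,
  cut:  whether the multicut rule may be used.
  Derivations are well-founded, possibly infinitely branching (rule BoxL).\<close>
inductive deriv :: "'a crule set \<Rightarrow> (nat \<Rightarrow> 'a sequent \<Rightarrow> bool) \<Rightarrow> (nat \<Rightarrow> bool)
                     \<Rightarrow> bool \<Rightarrow> 'a sequent \<Rightarrow> bool"
  for \<Theta> sc ok cut where
  ax: "deriv \<Theta> sc ok cut ({#p#}, {#p#})"
| botL: "deriv \<Theta> sc ok cut ({#Bot#}, {#})"
| topR: "deriv \<Theta> sc ok cut ({#}, {#Top#})"
| wL: "deriv \<Theta> sc ok cut (\<Gamma>, \<Delta>) \<Longrightarrow> deriv \<Theta> sc ok cut (\<Gamma> + {#p#}, \<Delta>)"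
| wR: "deriv \<Theta> sc ok cut (\<Gamma>, \<Delta>) \<Longrightarrow> deriv \<Theta> sc ok cut (\<Gamma>, {#p#} + \<Delta>)"
| cL: "deriv \<Theta> sc ok cut (\<Gamma> + {#p, p#}, \<Delta>) \<Longrightarrow> deriv \<Theta> sc ok cut (\<Gamma> + {#p#}, \<Delta>)"
| cR: "deriv \<Theta> sc ok cut (\<Gamma>, {#p, p#} + \<Delta>) \<Longrightarrow> deriv \<Theta> sc ok cut (\<Gamma>, {#p#} + \<Delta>)"
| negL: "deriv \<Theta> sc ok cut (\<Gamma>, {#p#} + \<Delta>) \<Longrightarrow> deriv \<Theta> sc ok cut (\<Gamma> + {#Neg p#}, \<Delta>)"
| negR: "deriv \<Theta> sc ok cut (\<Gamma> + {#p#}, \<Delta>) \<Longrightarrow> deriv \<Theta> sc ok cut (\<Gamma>, {#Neg p#} + \<Delta>)"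
| conjL: "deriv \<Theta> sc ok cut (\<Gamma> + {#p, q#}, \<Delta>) \<Longrightarrow> deriv \<Theta> sc ok cut (\<Gamma> + {#Conj p q#}, \<Delta>)"
| conjR: "deriv \<Theta> sc ok cut (\<Gamma>, {#p#} + \<Delta>) \<Longrightarrow> deriv \<Theta> sc ok cut (\<Gamma>, {#q#} + \<Delta>)
          \<Longrightarrow> deriv \<Theta> sc ok cut (\<Gamma>, {#Conj p q#} + \<Delta>)"
| disjL: "deriv \<Theta> sc ok cut (\<Gamma> + {#p#}, \<Delta>) \<Longrightarrow> deriv \<Theta> sc ok cut (\<Gamma> + {#q#}, \<Delta>)
          \<Longrightarrow> deriv \<Theta> sc ok cut (\<Gamma> + {#Disj p q#}, \<Delta>)"
| disjR: "deriv \<Theta> sc ok cut (\<Gamma>, {#p, q#} + \<Delta>) \<Longrightarrow> deriv \<Theta> sc ok cut (\<Gamma>, {#Disj p q#} + \<Delta>)"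
| impL: "deriv \<Theta> sc ok cut (\<Gamma>, {#p#} + \<Delta>) \<Longrightarrow> deriv \<Theta> sc ok cut (\<Gamma> + {#q#}, \<Delta>)
          \<Longrightarrow> deriv \<Theta> sc ok cut (\<Gamma> + {#Imp p q#}, \<Delta>)"
| impR: "deriv \<Theta> sc ok cut (\<Gamma> + {#p#}, {#q#} + \<Delta>) \<Longrightarrow> deriv \<Theta> sc ok cut (\<Gamma>, {#Imp p q#} + \<Delta>)"
| boxR: "\<lbrakk> ok (mdepth p); set rs \<subseteq> \<Theta>; sc (mdepth p) (mset (map snd rs), {#p#});
           deriv \<Theta> sc ok cut (\<Gamma>, {#bigconj (map fst rs)#} + \<Delta>) \<rbrakk>
          \<Longrightarrow> deriv \<Theta> sc ok cut (\<Gamma>, {#Box p#} + \<Delta>)"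
| boxL: "\<lbrakk> ok (mdepth p);
           \<And>S. \<lbrakk> finite S; S \<subseteq> \<Theta>; sc (mdepth p) (mset_set (snd ` S), {#p#}) \<rbrakk>
              \<Longrightarrow> deriv \<Theta> sc ok cut (\<Gamma> + mset_set (fst ` S), \<Delta>) \<rbrakk>
          \<Longrightarrow> deriv \<Theta> sc ok cut (\<Gamma> + {#Box p#}, \<Delta>)"
| mcut: "\<lbrakk> cut; m > 0; n > 0;
           deriv \<Theta> sc ok cut (\<Gamma>, replicate_mset m p + \<Delta>);
           deriv \<Theta> sc ok cut (\<Gamma>' + replicate_mset n p, \<Delta>') \<rbrakk>
          \<Longrightarrow> deriv \<Theta> sc ok cut (\<Gamma> + \<Gamma>', \<Delta> + \<Delta>')"

text \<open>Stratification of the side conditions by modal depth: levels n k is the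
  derivability relation at level k (for k <= n), where level k allows Box-rules
  with principal formula Box p only when mdepth p < k, whose side conditions are
  evaluated at level mdepth p.\<close>
primrec levels :: "'a crule set \<Rightarrow> nat \<Rightarrow> nat \<Rightarrow> 'a sequent \<Rightarrow> bool" where
  "levels \<Theta> 0 = (\<lambda>k. deriv \<Theta> (\<lambda>_ _. False) (\<lambda>_. False) True)"
| "levels \<Theta> (Suc n) = (\<lambda>k. if k \<le> n then levels \<Theta> n k
                             else deriv \<Theta> (levels \<Theta> n) (\<lambda>j. j \<le> n) True)"

definition level_deriv :: "'a crule set \<Rightarrow> nat \<Rightarrow> 'a sequent \<Rightarrow> bool" where
  "level_deriv \<Theta> k = levels \<Theta> k k"

definition derivable :: "'a crule set \<Rightarrow> 'a sequent \<Rightarrow> bool" where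
  "derivable \<Theta> s = deriv \<Theta> (level_deriv \<Theta>) (\<lambda>_. True) True s"

definition cutfree_derivable :: "'a crule set \<Rightarrow> 'a sequent \<Rightarrow> bool" where
  "cutfree_derivable \<Theta> s = deriv \<Theta> (level_deriv \<Theta>) (\<lambda>_. True) False s"

end

theory Submission
  imports Defs
begin



fun cval :: "('a \<Rightarrow> bool) \<Rightarrow> 'a fm \<Rightarrow> bool" where
  "cval v (Atom a) = v a"
| "cval v (Neg p) = (\<not> cval v p)"
| "cval v (Conj p q) = (cval v p \<and> cval v q)"
| "cval v (Disj p q) = (cval v p \<or> cval v q)"
| "cval v (Imp p q) = (cval v p \<longrightarrow> cval v q)"
| "cval v Top = True"
| "cval v Bot = False"
| "cval v (Box p) = False"

definition fsat :: "'a fm set \<Rightarrow> bool" where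
  "fsat X \<longleftrightarrow> (\<forall>F. finite F \<longrightarrow> F \<subseteq> X \<longrightarrow> (\<exists>v. \<forall>f\<in>F. cval v f))"

lemma fsat_max:
  assumes "fsat X"
  obtains M where "X \<subseteq> M" "fsat M" "\<And>Y. M \<subseteq> Y \<Longrightarrow> fsat Y \<Longrightarrow> Y = M"
proof -
  let ?A = "{Y. X \<subseteq> Y \<and> fsat Y}"
  have "\<forall>C\<in>chains ?A. \<exists>U\<in>?A. \<forall>Y\<in>C. Y \<subseteq> U"
  proof
    fix C assume C: "C \<in> chains ?A"
    show "\<exists>U\<in>?A. \<forall>Y\<in>C. Y \<subseteq> U"
    proof (intro bexI[of _ "X \<union> \<Union>C"] ballI)
      show "X \<union> \<Union>C \<in> ?A"
      proof (simp, unfold fsat_def, intro allI impI)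
        fix F assume F: "finite F" "F \<subseteq> X \<union> \<Union>C"
        show "\<exists>v. \<forall>f\<in>F. cval v f"
        proof (cases "C = {}")
          case True then show ?thesis using F assms unfolding fsat_def by auto
        next
          case False
          have "F \<subseteq> \<Union>C" using F False C unfolding chains_def by blast
          moreover have "subset.chain UNIV C" using C by (simp add: chains_alt_def subset.chain_def)
          ultimately obtain B where "B \<in> C" "F \<subseteq> B"
            using finite_subset_Union_chain[OF F(1) _ False] by metis
          then show ?thesis using C F(1) unfolding chains_def fsat_def by blast
        qed
      qed
    qed auto
  qed
  from Zorn_Lemma2[OF this] obtain M where "M \<in> ?A" "\<forall>Y\<in>?A. M \<subseteq> Y \<longrightarrow> Y = M" by blast
  then have "X \<subseteq> M" "fsat M" "\<And>Y. M \<subseteq> Y \<Longrightarrow> fsat Y \<Longrightarrow> Y = M" by blast+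
  then show ?thesis using that by blast
qed

lemma compactness:
  assumes "fsat X" shows "\<exists>v. \<forall>f\<in>X. cval v f"
proof -
  obtain M where XM: "X \<subseteq> M" and fM: "fsat M" and mx: "\<And>Y. M \<subseteq> Y \<Longrightarrow> fsat Y \<Longrightarrow> Y = M"
    using fsat_max[OF assms] by blast
  have N: "Neg \<psi> \<in> M \<longleftrightarrow> \<psi> \<notin> M" for \<psi>
  proof
    assume "Neg \<psi> \<in> M"
    show "\<psi> \<notin> M"
    proof
      assume "\<psi> \<in> M"
      then have a: "finite {\<psi>, Neg \<psi>}" "{\<psi>, Neg \<psi>} \<subseteq> M" using \<open>Neg \<psi> \<in> M\<close> by auto
      obtain v where "\<forall>f\<in>{\<psi>, Neg \<psi>}. cval v f" using fM[unfolded fsat_def, rule_format, OF a] by blast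
      then show False by simp
    qed
  next
    assume n: "\<psi> \<notin> M"
    show "Neg \<psi> \<in> M"
    proof (rule ccontr)
      assume n2: "Neg \<psi> \<notin> M"
      have "\<not> fsat (insert \<psi> M)"
      proof
        assume "fsat (insert \<psi> M)"
        then have "insert \<psi> M = M" by (intro mx) auto
        then have "\<psi> \<in> M" by (metis insertI1)
        then show False using n by contradiction
      qed
      then obtain F1 where F1: "finite F1" "F1 \<subseteq> insert \<psi> M" "\<not> (\<exists>v. \<forall>f\<in>F1. cval v f)"
        unfolding fsat_def by blast
      have "\<not> fsat (insert (Neg \<psi>) M)"
      proof
        assume "fsat (insert (Neg \<psi>) M)"
        then have "insert (Neg \<psi>) M = M" by (intro mx) auto
        then have "Neg \<psi> \<in> M" by (metis insertI1)
        then show False using n2 by contradiction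
      qed
      then obtain F2 where F2: "finite F2" "F2 \<subseteq> insert (Neg \<psi>) M" "\<not> (\<exists>v. \<forall>f\<in>F2. cval v f)"
        unfolding fsat_def by blast
      have a: "finite ((F1 - {\<psi>}) \<union> (F2 - {Neg \<psi>}))" "(F1 - {\<psi>}) \<union> (F2 - {Neg \<psi>}) \<subseteq> M"
        using F1 F2 by auto
      obtain v where v: "\<forall>f\<in>(F1 - {\<psi>}) \<union> (F2 - {Neg \<psi>}). cval v f" using fM[unfolded fsat_def, rule_format, OF a] by blast
      show False
      proof (cases "cval v \<psi>")
        case True
        have "\<not> (\<forall>f\<in>F1. cval v f)" using F1(3) by blast
        then obtain f where f: "f \<in> F1" "\<not> cval v f" by blast
        then have "f \<noteq> \<psi>" using True by blast
        then show ?thesis using f v by blast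
      next
        case False
        have "\<not> (\<forall>f\<in>F2. cval v f)" using F2(3) by blast
        then obtain f where f: "f \<in> F2" "\<not> cval v f" by blast
        then have "f \<noteq> Neg \<psi>" using False by auto
        then show ?thesis using f v by blast
      qed
    qed
  qed
  have E: "\<psi> \<in> M" if "finite F" "F \<subseteq> M" "\<And>v. \<forall>f\<in>F. cval v f \<Longrightarrow> cval v \<psi>" for F \<psi>
  proof (rule ccontr)
    assume "\<psi> \<notin> M"
    then have "Neg \<psi> \<in> M" using N by blast
    then have a: "finite (insert (Neg \<psi>) F)" "insert (Neg \<psi>) F \<subseteq> M" using that by auto
    obtain v where "\<forall>f\<in>insert (Neg \<psi>) F. cval v f" using fM[unfolded fsat_def, rule_format, OF a] by blast
    then show False using that(3)[of v] by auto
  qed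
  have F0: "\<psi> \<notin> M" if "\<And>v. \<not> cval v \<psi>" for \<psi>
  proof
    assume "\<psi> \<in> M"
    then have a: "finite {\<psi>}" "{\<psi>} \<subseteq> M" by auto
    obtain v where "\<forall>f\<in>{\<psi>}. cval v f" using fM[unfolded fsat_def, rule_format, OF a] by blast
    then show False using that by simp
  qed
  define v where "v a = (Atom a \<in> M)" for a
  have "\<phi> \<in> M \<longleftrightarrow> cval v \<phi>" for \<phi>
  proof (induction \<phi>)
    case (Atom x) then show ?case by (simp add: v_def)
  next
    case (Neg \<phi>) then show ?case using N by simp
  next
    case (Conj p q)
    have "Conj p q \<in> M \<longleftrightarrow> p \<in> M \<and> q \<in> M"
    proof
      assume a: "Conj p q \<in> M"
      show "p \<in> M \<and> q \<in> M"
        using E[of "{Conj p q}" p] E[of "{Conj p q}" q] a by auto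
    next
      assume a: "p \<in> M \<and> q \<in> M"
      show "Conj p q \<in> M" using E[of "{p, q}" "Conj p q"] a by auto
    qed
    then show ?case using Conj by simp
  next
    case (Disj p q)
    have "Disj p q \<in> M \<longleftrightarrow> p \<in> M \<or> q \<in> M"
    proof
      assume a: "Disj p q \<in> M"
      show "p \<in> M \<or> q \<in> M"
      proof (rule ccontr)
        assume "\<not> (p \<in> M \<or> q \<in> M)"
        then have "Neg p \<in> M" "Neg q \<in> M" using N by auto
        then have "Neg (Disj p q) \<in> M" using E[of "{Neg p, Neg q}" "Neg (Disj p q)"] by auto
        then show False using a N by blast
      qed
    next
      assume a: "p \<in> M \<or> q \<in> M"
      show "Disj p q \<in> M" using E[of "{p}" "Disj p q"] E[of "{q}" "Disj p q"] a by auto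
    qed
    then show ?case using Disj by simp
  next
    case (Imp p q)
    have "Imp p q \<in> M \<longleftrightarrow> (p \<in> M \<longrightarrow> q \<in> M)"
    proof
      assume a: "Imp p q \<in> M"
      show "p \<in> M \<longrightarrow> q \<in> M" using E[of "{Imp p q, p}" q] a by auto
    next
      assume a: "p \<in> M \<longrightarrow> q \<in> M"
      show "Imp p q \<in> M"
      proof (cases "p \<in> M")
        case True then show ?thesis using E[of "{q}" "Imp p q"] a by auto
      next
        case False then have "Neg p \<in> M" using N by auto
        then show ?thesis using E[of "{Neg p}" "Imp p q"] by auto
      qed
    qed
    then show ?case using Imp by simp
  next
    case Top then show ?case using E[of "{}" Top] by auto
  next
    case Bot then show ?case using F0[of Bot] by auto
  next
    case (Box p) then show ?case using F0[of "Box p"] by auto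
  qed
  then show ?thesis using XM by blast
qed




lemma wkL: "deriv \<Theta> sc ok cc (\<Gamma>, \<Delta>) \<Longrightarrow> deriv \<Theta> sc ok cc (\<Gamma> + A, \<Delta>)"
proof (induction A)
  case empty then show ?case by simp
next
  case (add x A)
  then show ?case using deriv.wL[of \<Theta> sc ok cc "\<Gamma> + A" \<Delta> x] by simp
qed

lemma wkR: "deriv \<Theta> sc ok cc (\<Gamma>, \<Delta>) \<Longrightarrow> deriv \<Theta> sc ok cc (\<Gamma>, A + \<Delta>)"
proof (induction A)
  case empty then show ?case by simp
next
  case (add x A)
  then show ?case using deriv.wR[of \<Theta> sc ok cc \<Gamma> "A + \<Delta>" x] by simp
qed

lemma wk: "deriv \<Theta> sc ok cc (\<Gamma>, \<Delta>) \<Longrightarrow> deriv \<Theta> sc ok cc (\<Gamma> + A, B + \<Delta>)"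
  using wkL wkR by blast

lemma mset_set_le_one: "(\<forall>x. count A x \<le> 1) \<Longrightarrow> mset_set (set_mset A) = A"
  by (simp add: multiset_eq_iff count_mset_set') (metis One_nat_def le_SucE le_zero_eq not_in_iff)

lemma mset_set_sub: "mset_set (set_mset A) \<subseteq># A"
  by (simp add: subseteq_mset_def count_mset_set')

lemma ctrL: "deriv \<Theta> sc ok cc (\<Gamma> + A, \<Delta>) \<Longrightarrow> deriv \<Theta> sc ok cc (\<Gamma> + mset_set (set_mset A), \<Delta>)"
proof (induction "size A" arbitrary: A rule: less_induct)
  case less
  show ?case
  proof (cases "\<forall>x. count A x \<le> 1")
    case True then show ?thesis using less.prems mset_set_le_one by metis
  next
    case False
    then obtain x where x: "count A x \<ge> 2" by (metis not_le one_add_one Suc_leI Suc_eq_plus1)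
    define A' where "A' = A - {#x, x#}"
    have sub: "{#x, x#} \<subseteq># A" using x by (simp add: subseteq_mset_def)
    have A: "A = A' + {#x, x#}" using sub unfolding A'_def by (metis subset_mset.diff_add)
    have "deriv \<Theta> sc ok cc ((\<Gamma> + A') + {#x, x#}, \<Delta>)" using less.prems A by (simp add: add.assoc)
    then have "deriv \<Theta> sc ok cc ((\<Gamma> + A') + {#x#}, \<Delta>)" by (rule deriv.cL)
    then have d: "deriv \<Theta> sc ok cc (\<Gamma> + (A' + {#x#}), \<Delta>)" by (simp add: add.assoc)
    have "size (A' + {#x#}) < size A" using A by simp
    from less.hyps[OF this d] have "deriv \<Theta> sc ok cc (\<Gamma> + mset_set (set_mset (A' + {#x#})), \<Delta>)" .
    moreover have "set_mset (A' + {#x#}) = set_mset A" using A by auto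
    ultimately show ?thesis by simp
  qed
qed

lemma ctrR: "deriv \<Theta> sc ok cc (\<Gamma>, A + \<Delta>) \<Longrightarrow> deriv \<Theta> sc ok cc (\<Gamma>, mset_set (set_mset A) + \<Delta>)"
proof (induction "size A" arbitrary: A rule: less_induct)
  case less
  show ?case
  proof (cases "\<forall>x. count A x \<le> 1")
    case True then show ?thesis using less.prems mset_set_le_one by metis
  next
    case False
    then obtain x where x: "count A x \<ge> 2" by (metis not_le one_add_one Suc_leI Suc_eq_plus1)
    define A' where "A' = A - {#x, x#}"
    have sub: "{#x, x#} \<subseteq># A" using x by (simp add: subseteq_mset_def)
    have A: "A = A' + {#x, x#}" using sub unfolding A'_def by (metis subset_mset.diff_add)
    have "deriv \<Theta> sc ok cc (\<Gamma>, {#x, x#} + (A' + \<Delta>))" using less.prems A by (simp add: add_ac)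
    then have "deriv \<Theta> sc ok cc (\<Gamma>, {#x#} + (A' + \<Delta>))" by (rule deriv.cR)
    then have d: "deriv \<Theta> sc ok cc (\<Gamma>, (A' + {#x#}) + \<Delta>)" by (simp add: add_ac)
    have "size (A' + {#x#}) < size A" using A by simp
    from less.hyps[OF this d] have "deriv \<Theta> sc ok cc (\<Gamma>, mset_set (set_mset (A' + {#x#})) + \<Delta>)" .
    moreover have "set_mset (A' + {#x#}) = set_mset A" using A by auto
    ultimately show ?thesis by simp
  qed
qed

lemma setR: "deriv \<Theta> sc ok cc (\<Gamma>, A + \<Delta>) \<Longrightarrow> set_mset A \<subseteq> set_mset B \<Longrightarrow> deriv \<Theta> sc ok cc (\<Gamma>, B + \<Delta>)"
proof -
  assume d: "deriv \<Theta> sc ok cc (\<Gamma>, A + \<Delta>)" and s: "set_mset A \<subseteq> set_mset B"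
  have "mset_set (set_mset A) \<subseteq># B" using s
    by (auto simp: subseteq_mset_def count_mset_set' Suc_leI)
  then obtain C where B: "B = mset_set (set_mset A) + C" by (metis subset_mset.le_iff_add)
  from ctrR[OF d] have "deriv \<Theta> sc ok cc (\<Gamma>, mset_set (set_mset A) + \<Delta>)" .
  then have "deriv \<Theta> sc ok cc (\<Gamma>, C + (mset_set (set_mset A) + \<Delta>))" by (rule wkR)
  then show ?thesis using B by (simp add: add_ac)
qed

lemma setL: "deriv \<Theta> sc ok cc (A + \<Gamma>, \<Delta>) \<Longrightarrow> set_mset A \<subseteq> set_mset B \<Longrightarrow> deriv \<Theta> sc ok cc (B + \<Gamma>, \<Delta>)"
proof -
  assume d: "deriv \<Theta> sc ok cc (A + \<Gamma>, \<Delta>)" and s: "set_mset A \<subseteq> set_mset B"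
  have "mset_set (set_mset A) \<subseteq># B" using s
    by (auto simp: subseteq_mset_def count_mset_set' Suc_leI)
  then obtain C where B: "B = mset_set (set_mset A) + C" by (metis subset_mset.le_iff_add)
  from ctrL[of \<Theta> sc ok cc \<Gamma> A \<Delta>] d have "deriv \<Theta> sc ok cc (\<Gamma> + mset_set (set_mset A), \<Delta>)" by (simp add: add_ac)
  then have "deriv \<Theta> sc ok cc ((\<Gamma> + mset_set (set_mset A)) + C, \<Delta>)" by (rule wkL)
  then show ?thesis using B by (simp add: add_ac)
qed

lemma levels_deriv: "\<forall>k. \<exists>sc ok. levels \<Theta> n k = deriv \<Theta> sc ok True"
proof (induction n)
  case 0 then show ?case by auto
next
  case (Suc n) then show ?case by auto
qed

lemma level_deriv_eq: "\<exists>sc ok. level_deriv \<Theta> k = deriv \<Theta> sc ok True"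
  unfolding level_deriv_def using levels_deriv by blast




definition boxtrue :: "'a crule set \<Rightarrow> (nat \<Rightarrow> 'a sequent \<Rightarrow> bool) \<Rightarrow> ('a \<Rightarrow> bool) \<Rightarrow> 'a fm \<Rightarrow> bool" where
  "boxtrue \<Theta> sc v p \<longleftrightarrow> (\<exists>rs. set rs \<subseteq> \<Theta> \<and> sc (mdepth p) (mset (map snd rs), {#p#}) \<and> (\<forall>x\<in>set rs. cval v (fst x)))"

fun sem :: "'a crule set \<Rightarrow> (nat \<Rightarrow> 'a sequent \<Rightarrow> bool) \<Rightarrow> ('a \<Rightarrow> bool) \<Rightarrow> 'a fm \<Rightarrow> bool" where
  "sem \<Theta> sc v (Atom a) = v a"
| "sem \<Theta> sc v (Neg p) = (\<not> sem \<Theta> sc v p)"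
| "sem \<Theta> sc v (Conj p q) = (sem \<Theta> sc v p \<and> sem \<Theta> sc v q)"
| "sem \<Theta> sc v (Disj p q) = (sem \<Theta> sc v p \<or> sem \<Theta> sc v q)"
| "sem \<Theta> sc v (Imp p q) = (sem \<Theta> sc v p \<longrightarrow> sem \<Theta> sc v q)"
| "sem \<Theta> sc v Top = True"
| "sem \<Theta> sc v Bot = False"
| "sem \<Theta> sc v (Box p) = boxtrue \<Theta> sc v p"

definition valid :: "'a crule set \<Rightarrow> (nat \<Rightarrow> 'a sequent \<Rightarrow> bool) \<Rightarrow> 'a sequent \<Rightarrow> bool" where
  "valid \<Theta> sc s \<longleftrightarrow> (\<forall>v. (\<forall>x\<in>#fst s. sem \<Theta> sc v x) \<longrightarrow> (\<exists>x\<in>#snd s. sem \<Theta> sc v x))"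

lemma sem_classical: "classical \<phi> \<Longrightarrow> sem \<Theta> sc v \<phi> = cval v \<phi>"
  by (induction \<phi>) auto

lemma sem_bigconj: "sem \<Theta> sc v (bigconj xs) = (\<forall>x\<in>set xs. sem \<Theta> sc v x)"
  by (induction xs rule: bigconj.induct) auto

lemma cval_bigconj: "cval v (bigconj xs) = (\<forall>x\<in>set xs. cval v x)"
  by (induction xs rule: bigconj.induct) auto

lemma classical_bigconj: "\<forall>x\<in>set xs. classical x \<Longrightarrow> classical (bigconj xs)"
  by (induction xs rule: bigconj.induct) auto

lemma ct_fst: "causal_theory \<Theta> \<Longrightarrow> x \<in> \<Theta> \<Longrightarrow> classical (fst x)"
  unfolding causal_theory_def by auto

lemma ct_snd: "causal_theory \<Theta> \<Longrightarrow> x \<in> \<Theta> \<Longrightarrow> classical (snd x)"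
  unfolding causal_theory_def by auto

lemma soundness:
  assumes ct: "causal_theory \<Theta>"
    and scC: "\<And>k (rs :: 'a crule list) p. sc k (mset (map snd rs), {#p#}) \<Longrightarrow> sc k (mset_set (snd ` set rs), {#p#})"
  shows "deriv \<Theta> sc ok cc s \<Longrightarrow> valid \<Theta> sc s"
proof (induction rule: deriv.induct)
  case (boxR p rs \<Gamma> \<Delta>)
  show ?case unfolding valid_def
  proof (intro allI impI)
    fix v assume G: "\<forall>x\<in>#fst (\<Gamma>, {#Box p#} + \<Delta>). sem \<Theta> sc v x"
    then have "sem \<Theta> sc v (bigconj (map fst rs)) \<or> (\<exists>x\<in>#\<Delta>. sem \<Theta> sc v x)"
      using boxR.IH unfolding valid_def by auto
    then show "\<exists>x\<in>#snd (\<Gamma>, {#Box p#} + \<Delta>). sem \<Theta> sc v x"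
    proof
      assume "sem \<Theta> sc v (bigconj (map fst rs))"
      then have "\<forall>x\<in>set rs. sem \<Theta> sc v (fst x)" by (simp add: sem_bigconj)
      then have "\<forall>x\<in>set rs. cval v (fst x)" using ct_fst[OF ct] boxR.hyps(2) sem_classical by blast
      then have "boxtrue \<Theta> sc v p" unfolding boxtrue_def using boxR.hyps(2,3) by blast
      then show ?thesis by simp
    qed auto
  qed
next
  case (boxL p \<Gamma> \<Delta>)
  show ?case unfolding valid_def
  proof (intro allI impI)
    fix v assume G: "\<forall>x\<in>#fst (\<Gamma> + {#Box p#}, \<Delta>). sem \<Theta> sc v x"
    then have "boxtrue \<Theta> sc v p" by simp
    then obtain rs where rs: "set rs \<subseteq> \<Theta>" "sc (mdepth p) (mset (map snd rs), {#p#})"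
       "\<forall>x\<in>set rs. cval v (fst x)" unfolding boxtrue_def by blast
    have "sc (mdepth p) (mset_set (snd ` set rs), {#p#})" by (rule scC[OF rs(2)])
    then have V: "valid \<Theta> sc (\<Gamma> + mset_set (fst ` set rs), \<Delta>)" using boxL.IH rs(1) by blast
    have "\<forall>x\<in>#mset_set (fst ` set rs). sem \<Theta> sc v x"
    proof
      fix x assume "x \<in># mset_set (fst ` set rs)"
      then obtain r where "r \<in> set rs" "x = fst r" by auto
      then show "sem \<Theta> sc v x" using rs ct_fst[OF ct] sem_classical by blast
    qed
    then show "\<exists>x\<in>#snd (\<Gamma> + {#Box p#}, \<Delta>). sem \<Theta> sc v x" using V G unfolding valid_def by auto
  qed
next
  case (mcut m n \<Gamma> p \<Delta> \<Gamma>' \<Delta>')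
  show ?case unfolding valid_def
  proof (intro allI impI)
    fix v assume G: "\<forall>x\<in>#fst (\<Gamma> + \<Gamma>', \<Delta> + \<Delta>'). sem \<Theta> sc v x"
    then have G1: "\<forall>x\<in>#\<Gamma>. sem \<Theta> sc v x" and G2: "\<forall>x\<in>#\<Gamma>'. sem \<Theta> sc v x" by auto
    have "\<exists>x\<in>#replicate_mset m p + \<Delta>. sem \<Theta> sc v x" using mcut.IH(1) G1 unfolding valid_def by auto
    then have "sem \<Theta> sc v p \<or> (\<exists>x\<in>#\<Delta>. sem \<Theta> sc v x)" by (auto simp: in_replicate_mset split: if_splits)
    then show "\<exists>x\<in>#snd (\<Gamma> + \<Gamma>', \<Delta> + \<Delta>'). sem \<Theta> sc v x"
    proof
      assume p: "sem \<Theta> sc v p"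
      have "\<forall>x\<in>#\<Gamma>' + replicate_mset n p. sem \<Theta> sc v x" using G2 p by (auto simp: in_replicate_mset)
      then have "\<exists>x\<in>#\<Delta>'. sem \<Theta> sc v x" using mcut.IH(2) unfolding valid_def by auto
      then show ?thesis by auto
    qed auto
  qed
qed (auto simp: valid_def)




context fixes \<Theta> :: "'a crule set" and sc :: "nat \<Rightarrow> 'a sequent \<Rightarrow> bool" and ok :: "nat \<Rightarrow> bool" and c :: bool begin

lemma negL': "deriv \<Theta> sc ok c (\<Gamma>, add_mset p \<Delta>) \<Longrightarrow> deriv \<Theta> sc ok c (add_mset (Neg p) \<Gamma>, \<Delta>)"
  using deriv.negL[where \<Gamma>=\<Gamma> and p=p and \<Delta>=\<Delta>] by simp
lemma conjL': "deriv \<Theta> sc ok c (add_mset p (add_mset q \<Gamma>), \<Delta>) \<Longrightarrow> deriv \<Theta> sc ok c (add_mset (Conj p q) \<Gamma>, \<Delta>)"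
  using deriv.conjL[where \<Gamma>=\<Gamma> and p=p and q=q and \<Delta>=\<Delta>] by simp
lemma disjL': "deriv \<Theta> sc ok c (add_mset p \<Gamma>, \<Delta>) \<Longrightarrow> deriv \<Theta> sc ok c (add_mset q \<Gamma>, \<Delta>) \<Longrightarrow> deriv \<Theta> sc ok c (add_mset (Disj p q) \<Gamma>, \<Delta>)"
  using deriv.disjL[where \<Gamma>=\<Gamma> and p=p and q=q and \<Delta>=\<Delta>] by simp
lemma impL': "deriv \<Theta> sc ok c (\<Gamma>, add_mset p \<Delta>) \<Longrightarrow> deriv \<Theta> sc ok c (add_mset q \<Gamma>, \<Delta>) \<Longrightarrow> deriv \<Theta> sc ok c (add_mset (Imp p q) \<Gamma>, \<Delta>)"
  using deriv.impL[where \<Gamma>=\<Gamma> and p=p and q=q and \<Delta>=\<Delta>] by simp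
lemma negR': "deriv \<Theta> sc ok c (add_mset p \<Gamma>, \<Delta>) \<Longrightarrow> deriv \<Theta> sc ok c (\<Gamma>, add_mset (Neg p) \<Delta>)"
  using deriv.negR[where \<Gamma>=\<Gamma> and p=p and \<Delta>=\<Delta>] by simp
lemma conjR': "deriv \<Theta> sc ok c (\<Gamma>, add_mset p \<Delta>) \<Longrightarrow> deriv \<Theta> sc ok c (\<Gamma>, add_mset q \<Delta>) \<Longrightarrow> deriv \<Theta> sc ok c (\<Gamma>, add_mset (Conj p q) \<Delta>)"
  using deriv.conjR[where \<Gamma>=\<Gamma> and p=p and q=q and \<Delta>=\<Delta>] by simp
lemma disjR': "deriv \<Theta> sc ok c (\<Gamma>, add_mset p (add_mset q \<Delta>)) \<Longrightarrow> deriv \<Theta> sc ok c (\<Gamma>, add_mset (Disj p q) \<Delta>)"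
  using deriv.disjR[where \<Gamma>=\<Gamma> and p=p and q=q and \<Delta>=\<Delta>] by simp
lemma impR': "deriv \<Theta> sc ok c (add_mset p \<Gamma>, add_mset q \<Delta>) \<Longrightarrow> deriv \<Theta> sc ok c (\<Gamma>, add_mset (Imp p q) \<Delta>)"
  using deriv.impR[where \<Gamma>=\<Gamma> and p=p and q=q and \<Delta>=\<Delta>] by simp
lemma wL': "deriv \<Theta> sc ok c (\<Gamma>, \<Delta>) \<Longrightarrow> deriv \<Theta> sc ok c (add_mset p \<Gamma>, \<Delta>)"
  using deriv.wL[where \<Gamma>=\<Gamma> and p=p and \<Delta>=\<Delta>] by simp
lemma wR': "deriv \<Theta> sc ok c (\<Gamma>, \<Delta>) \<Longrightarrow> deriv \<Theta> sc ok c (\<Gamma>, add_mset p \<Delta>)"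
  using deriv.wR[where \<Gamma>=\<Gamma> and p=p and \<Delta>=\<Delta>] by simp
lemma botL': "deriv \<Theta> sc ok c (add_mset Bot \<Gamma>, \<Delta>)"
  using wk[OF deriv.botL[of \<Theta> sc ok c], of \<Gamma> \<Delta>] by (simp add: add.commute)
lemma topR': "deriv \<Theta> sc ok c (\<Gamma>, add_mset Top \<Delta>)"
  using wk[OF deriv.topR[of \<Theta> sc ok c], of \<Gamma> \<Delta>] by (simp add: add.commute)
lemma ax': "deriv \<Theta> sc ok c (add_mset p \<Gamma>, add_mset p \<Delta>)"
  using wk[OF deriv.ax[of \<Theta> sc ok c p], of \<Gamma> \<Delta>] by (simp add: add.commute)
lemma boxR': "ok (mdepth p) \<Longrightarrow> set rs \<subseteq> \<Theta> \<Longrightarrow> sc (mdepth p) (mset (map snd rs), {#p#}) \<Longrightarrow>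
   deriv \<Theta> sc ok c (\<Gamma>, add_mset (bigconj (map fst rs)) \<Delta>) \<Longrightarrow> deriv \<Theta> sc ok c (\<Gamma>, add_mset (Box p) \<Delta>)"
  using deriv.boxR[where \<Gamma>=\<Gamma> and p=p and rs=rs and \<Delta>=\<Delta>] by simp
lemma boxL': "ok (mdepth p) \<Longrightarrow> (\<And>S. finite S \<Longrightarrow> S \<subseteq> \<Theta> \<Longrightarrow> sc (mdepth p) (mset_set (snd ` S), {#p#})
     \<Longrightarrow> deriv \<Theta> sc ok c (\<Gamma> + mset_set (fst ` S), \<Delta>)) \<Longrightarrow> deriv \<Theta> sc ok c (add_mset (Box p) \<Gamma>, \<Delta>)"
  using deriv.boxL[where \<Gamma>=\<Gamma> and p=p and \<Delta>=\<Delta>] by simp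

end

lemma boxes:
  "\<forall>(q,rs)\<in>set L. set rs \<subseteq> \<Theta> \<and> sc (mdepth q) (mset (map snd rs), {#q#}) \<Longrightarrow>
   deriv \<Theta> sc (\<lambda>_. True) c (\<Gamma>, mset (map (\<lambda>(q,rs). bigconj (map fst rs)) L) + D) \<Longrightarrow>
   deriv \<Theta> sc (\<lambda>_. True) c (\<Gamma>, mset (map (\<lambda>(q,rs). Box q) L) + D)"
proof (induction L arbitrary: D)
  case Nil then show ?case by simp
next
  case (Cons a L)
  obtain q rs where a: "a = (q, rs)" by fastforce
  have "deriv \<Theta> sc (\<lambda>_. True) c (\<Gamma>, mset (map (\<lambda>(q,rs). bigconj (map fst rs)) L) + add_mset (bigconj (map fst rs)) D)"
    using Cons.prems(2) a by simp
  then have "deriv \<Theta> sc (\<lambda>_. True) c (\<Gamma>, mset (map (\<lambda>(q,rs). Box q) L) + add_mset (bigconj (map fst rs)) D)"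
    using Cons.IH[of "add_mset (bigconj (map fst rs)) D"] Cons.prems(1) by simp
  then have "deriv \<Theta> sc (\<lambda>_. True) c (\<Gamma>, add_mset (bigconj (map fst rs)) (mset (map (\<lambda>(q,rs). Box q) L) + D))"
    by simp
  then have "deriv \<Theta> sc (\<lambda>_. True) c (\<Gamma>, add_mset (Box q) (mset (map (\<lambda>(q,rs). Box q) L) + D))"
    using boxR'[where p=q and rs=rs] Cons.prems(1) a by simp
  then show ?case using a by simp
qed





fun nb :: "'a fm \<Rightarrow> nat" where
  "nb (Atom a) = 0"
| "nb (Neg p) = nb p"
| "nb (Conj p q) = nb p + nb q"
| "nb (Disj p q) = nb p + nb q"
| "nb (Imp p q) = nb p + nb q"
| "nb Top = 0"
| "nb Bot = 0"
| "nb (Box p) = Suc (nb p)"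

fun wt :: "'a fm \<Rightarrow> nat" where
  "wt (Atom a) = 1"
| "wt (Neg p) = Suc (wt p)"
| "wt (Conj p q) = Suc (wt p + wt q)"
| "wt (Disj p q) = Suc (wt p + wt q)"
| "wt (Imp p q) = Suc (wt p + wt q)"
| "wt Top = 1"
| "wt Bot = 1"
| "wt (Box p) = Suc (wt p)"

definition nbs :: "'a fm multiset \<Rightarrow> nat" where "nbs M = sum_mset (image_mset nb M)"
definition wts :: "'a fm multiset \<Rightarrow> nat" where "wts M = sum_mset (image_mset wt M)"

lemma nbs_simps[simp]: "nbs {#} = 0" "nbs (add_mset x M) = nb x + nbs M" "nbs (M + N) = nbs M + nbs N"
  by (auto simp: nbs_def)
lemma wts_simps[simp]: "wts {#} = 0" "wts (add_mset x M) = wt x + wts M" "wts (M + N) = wts M + wts N"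
  by (auto simp: wts_def)

lemma nb_classical: "classical x \<Longrightarrow> nb x = 0"
  by (induction x) auto

lemma nbs_zero: "\<forall>x\<in>#M. classical x \<Longrightarrow> nbs M = 0"
  by (induction M) (auto simp: nb_classical)

lemma nb_le_nbs: "x \<in># M \<Longrightarrow> nb x \<le> nbs M"
  by (metis le_add1 multi_member_split nbs_simps(2))

definition mu :: "'a sequent \<Rightarrow> nat \<times> nat" where
  "mu s = (nbs (fst s) + nbs (snd s), wts (fst s) + wts (snd s))"

definition isAtom :: "'a fm \<Rightarrow> bool" where "isAtom x \<longleftrightarrow> (\<exists>a. x = Atom a)"
definition isBox :: "'a fm \<Rightarrow> bool" where "isBox x \<longleftrightarrow> (\<exists>p. x = Box p)"

lemma isAtom_classical: "isAtom x \<Longrightarrow> classical x"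
  by (auto simp: isAtom_def)

lemma wf_mu: "wf (inv_image (less_than <*lex*> less_than) mu)"
  by (intro wf_inv_image wf_lex_prod wf_less_than)

lemma completeness:
  fixes \<Theta> :: "'a crule set" and sc :: "nat \<Rightarrow> 'a sequent \<Rightarrow> bool"
  assumes ct: "causal_theory \<Theta>"
    and scW: "\<And>k (rs :: 'a crule list) p. sc k (mset_set (snd ` set rs), {#p#}) \<Longrightarrow> sc k (mset (map snd rs), {#p#})"
  shows "valid \<Theta> sc s \<Longrightarrow> deriv \<Theta> sc (\<lambda>_. True) False s"
proof (induction s rule: wf_induct_rule[OF wf_mu])
  case (1 s)
  obtain \<Gamma> \<Delta> where s: "s = (\<Gamma>, \<Delta>)" by fastforce
  have V: "valid \<Theta> sc (\<Gamma>, \<Delta>)" using "1.prems" s by simp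
  have IH: "\<And>\<Gamma>' \<Delta>'. nbs \<Gamma>' + nbs \<Delta>' < nbs \<Gamma> + nbs \<Delta> \<or> (nbs \<Gamma>' + nbs \<Delta>' = nbs \<Gamma> + nbs \<Delta> \<and> wts \<Gamma>' + wts \<Delta>' < wts \<Gamma> + wts \<Delta>)
     \<Longrightarrow> valid \<Theta> sc (\<Gamma>', \<Delta>') \<Longrightarrow> deriv \<Theta> sc (\<lambda>_. True) False (\<Gamma>', \<Delta>')"
    using "1.IH" s by (auto simp: mu_def)
  show ?case unfolding s
  proof (cases "\<exists>x\<in>#\<Gamma>. \<not> isAtom x \<and> \<not> isBox x")
    case True
    then obtain x where x: "x \<in># \<Gamma>" "\<not> isAtom x" "\<not> isBox x" by blast
    define G where "G = \<Gamma> - {#x#}"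
    have Gx: "\<Gamma> = add_mset x G" using x(1) by (simp add: G_def)
    have "deriv \<Theta> sc (\<lambda>_. True) False (add_mset x G, \<Delta>)"
    proof (cases x)
      case (Atom a) then show ?thesis using x by (simp add: isAtom_def)
    next
      case (Box p) then show ?thesis using x by (simp add: isBox_def)
    next
      case Bot then show ?thesis by (simp add: botL')
    next
      case Top
      have "deriv \<Theta> sc (\<lambda>_. True) False (G, \<Delta>)"
        by (rule IH) (use V in \<open>auto simp: Gx Top valid_def\<close>)
      then show ?thesis unfolding Top by (rule wL')
    next
      case (Neg p)
      have "deriv \<Theta> sc (\<lambda>_. True) False (G, add_mset p \<Delta>)"
        by (rule IH) (use V in \<open>auto simp: Gx Neg valid_def\<close>)
      then show ?thesis unfolding Neg by (rule negL')
    next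
      case (Conj p q)
      have "deriv \<Theta> sc (\<lambda>_. True) False (add_mset p (add_mset q G), \<Delta>)"
        by (rule IH) (use V in \<open>auto simp: Gx Conj valid_def\<close>)
      then show ?thesis unfolding Conj by (rule conjL')
    next
      case (Disj p q)
      have "deriv \<Theta> sc (\<lambda>_. True) False (add_mset p G, \<Delta>)"
        by (rule IH) (use V in \<open>auto simp: Gx Disj valid_def\<close>)
      moreover have "deriv \<Theta> sc (\<lambda>_. True) False (add_mset q G, \<Delta>)"
        by (rule IH) (use V in \<open>auto simp: Gx Disj valid_def\<close>)
      ultimately show ?thesis unfolding Disj by (rule disjL')
    next
      case (Imp p q)
      have "deriv \<Theta> sc (\<lambda>_. True) False (G, add_mset p \<Delta>)"
        by (rule IH) (use V in \<open>auto simp: Gx Imp valid_def\<close>)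
      moreover have "deriv \<Theta> sc (\<lambda>_. True) False (add_mset q G, \<Delta>)"
        by (rule IH) (use V in \<open>auto simp: Gx Imp valid_def\<close>)
      ultimately show ?thesis unfolding Imp by (rule impL')
    qed
    then show "deriv \<Theta> sc (\<lambda>_. True) False (\<Gamma>, \<Delta>)" using Gx by simp
  next
    case GAB: False
    show "deriv \<Theta> sc (\<lambda>_. True) False (\<Gamma>, \<Delta>)"
    proof (cases "\<exists>x\<in>#\<Delta>. \<not> isAtom x \<and> \<not> isBox x")
      case True
      then obtain x where x: "x \<in># \<Delta>" "\<not> isAtom x" "\<not> isBox x" by blast
      define D where "D = \<Delta> - {#x#}"
      have Dx: "\<Delta> = add_mset x D" using x(1) by (simp add: D_def)
      have "deriv \<Theta> sc (\<lambda>_. True) False (\<Gamma>, add_mset x D)"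
      proof (cases x)
        case (Atom a) then show ?thesis using x by (simp add: isAtom_def)
      next
        case (Box p) then show ?thesis using x by (simp add: isBox_def)
      next
        case Top then show ?thesis by (simp add: topR')
      next
        case Bot
        have "deriv \<Theta> sc (\<lambda>_. True) False (\<Gamma>, D)"
          by (rule IH) (use V in \<open>auto simp: Dx Bot valid_def\<close>)
        then show ?thesis unfolding Bot by (rule wR')
      next
        case (Neg p)
        have "deriv \<Theta> sc (\<lambda>_. True) False (add_mset p \<Gamma>, D)"
          by (rule IH) (use V in \<open>auto simp: Dx Neg valid_def\<close>)
        then show ?thesis unfolding Neg by (rule negR')
      next
        case (Conj p q)
        have "deriv \<Theta> sc (\<lambda>_. True) False (\<Gamma>, add_mset p D)"
          by (rule IH) (use V in \<open>auto simp: Dx Conj valid_def\<close>)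
        moreover have "deriv \<Theta> sc (\<lambda>_. True) False (\<Gamma>, add_mset q D)"
          by (rule IH) (use V in \<open>auto simp: Dx Conj valid_def\<close>)
        ultimately show ?thesis unfolding Conj by (rule conjR')
      next
        case (Disj p q)
        have "deriv \<Theta> sc (\<lambda>_. True) False (\<Gamma>, add_mset p (add_mset q D))"
          by (rule IH) (use V in \<open>auto simp: Dx Disj valid_def\<close>)
        then show ?thesis unfolding Disj by (rule disjR')
      next
        case (Imp p q)
        have "deriv \<Theta> sc (\<lambda>_. True) False (add_mset p \<Gamma>, add_mset q D)"
          by (rule IH) (use V in \<open>auto simp: Dx Imp valid_def\<close>)
        then show ?thesis unfolding Imp by (rule impR')
      qed
      then show "deriv \<Theta> sc (\<lambda>_. True) False (\<Gamma>, \<Delta>)" using Dx by simp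
    next
      case DAB: False
      have GA: "\<forall>x\<in>#\<Gamma>. isAtom x \<or> isBox x" using GAB by blast
      have DA: "\<forall>x\<in>#\<Delta>. isAtom x \<or> isBox x" using DAB by blast
      show "deriv \<Theta> sc (\<lambda>_. True) False (\<Gamma>, \<Delta>)"
      proof (cases "\<exists>p. Box p \<in># \<Gamma>")
        case True
        then obtain p where p: "Box p \<in># \<Gamma>" by blast
        define G where "G = \<Gamma> - {#Box p#}"
        have Gx: "\<Gamma> = add_mset (Box p) G" using p by (simp add: G_def)
        have "deriv \<Theta> sc (\<lambda>_. True) False (add_mset (Box p) G, \<Delta>)"
        proof (rule boxL')
          show "True" by simp
        next
          fix S assume S: "finite S" "S \<subseteq> \<Theta>" "sc (mdepth p) (mset_set (snd ` S), {#p#})"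
          have clS: "\<forall>x\<in>#mset_set (fst ` S). classical x"
            using S(1,2) ct_fst[OF ct] by auto
          show "deriv \<Theta> sc (\<lambda>_. True) False (G + mset_set (fst ` S), \<Delta>)"
          proof (rule IH)
            show "nbs (G + mset_set (fst ` S)) + nbs \<Delta> < nbs \<Gamma> + nbs \<Delta> \<or>
              (nbs (G + mset_set (fst ` S)) + nbs \<Delta> = nbs \<Gamma> + nbs \<Delta> \<and> wts (G + mset_set (fst ` S)) + wts \<Delta> < wts \<Gamma> + wts \<Delta>)"
              using nbs_zero[OF clS] Gx by simp
          next
            show "valid \<Theta> sc (G + mset_set (fst ` S), \<Delta>)" unfolding valid_def
            proof (intro allI impI)
              fix v assume A: "\<forall>x\<in>#fst (G + mset_set (fst ` S), \<Delta>). sem \<Theta> sc v x"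
              obtain rs where rs: "set rs = S" "distinct rs" using finite_distinct_list[OF S(1)] by blast
              have "sc (mdepth p) (mset (map snd rs), {#p#})" using scW[of "mdepth p" rs p] S(3) rs(1) by simp
              moreover have "\<forall>x\<in>set rs. cval v (fst x)"
              proof
                fix x assume x: "x \<in> set rs"
                then have "fst x \<in># mset_set (fst ` S)" using rs(1) S(1) by simp
                then have "sem \<Theta> sc v (fst x)" using A by simp
                moreover have "classical (fst x)" using x rs(1) S(2) ct_fst[OF ct] by blast
                ultimately show "cval v (fst x)" using sem_classical by metis
              qed
              ultimately have "boxtrue \<Theta> sc v p" unfolding boxtrue_def using rs(1) S(2) by blast
              then have "\<forall>x\<in>#\<Gamma>. sem \<Theta> sc v x" using A Gx by auto
              then show "\<exists>x\<in>#snd (G + mset_set (fst ` S), \<Delta>). sem \<Theta> sc v x" using V unfolding valid_def by auto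
            qed
          qed
        qed
        then show ?thesis using Gx by simp
      next
        case NB: False
        have GAt: "\<forall>x\<in>#\<Gamma>. isAtom x" using GA NB by (auto simp: isBox_def)
        have GCl: "\<forall>x\<in>#\<Gamma>. classical x" using GAt isAtom_classical by blast
        show ?thesis
        proof (cases "\<exists>q. Box q \<in># \<Delta>")
          case False
          have DAt: "\<forall>x\<in>#\<Delta>. isAtom x" using DA False by (auto simp: isBox_def)
          define v where "v a = (Atom a \<in># \<Gamma>)" for a
          have "\<forall>x\<in>#\<Gamma>. sem \<Theta> sc v x" using GAt by (auto simp: isAtom_def v_def)
          then obtain y where y: "y \<in># \<Delta>" "sem \<Theta> sc v y" using V unfolding valid_def by auto
          then obtain a where a: "y = Atom a" using DAt by (auto simp: isAtom_def)
          then have aG: "Atom a \<in># \<Gamma>" using y by (simp add: v_def)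
          have "deriv \<Theta> sc (\<lambda>_. True) False (add_mset (Atom a) (\<Gamma> - {#Atom a#}), add_mset (Atom a) (\<Delta> - {#Atom a#}))"
            by (rule ax')
          then show ?thesis using aG y a by simp
        next
          case True
          then obtain q0 where q0: "Box q0 \<in># \<Delta>" by blast
          define cf where "cf rs = bigconj (map fst rs)" for rs :: "'a crule list"
          define Cand where "Cand = {(q, rs). Box q \<in># \<Delta> \<and> set rs \<subseteq> \<Theta> \<and> sc (mdepth q) (mset (map snd rs), {#q#})}"
          define Da where "Da = filter_mset (\<lambda>x. \<not> isBox x) \<Delta>"
          define Bs where "Bs = filter_mset isBox \<Delta>"
          have DBD: "\<Delta> = Bs + Da" unfolding Bs_def Da_def by (rule multiset_partition)
          have DaAt: "\<forall>x\<in>#Da. isAtom x" using DA by (auto simp: Da_def)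
          define nf where "nf = (\<lambda>(q::'a fm, rs). Neg (cf rs))"
          define X where "X = set_mset \<Gamma> \<union> Neg ` set_mset Da \<union> nf ` Cand"
          have "\<not> fsat X"
          proof
            assume "fsat X"
            from compactness[OF this] obtain v where v: "\<forall>f\<in>X. cval v f" by blast
            have "\<forall>x\<in>#\<Gamma>. sem \<Theta> sc v x"
              using v GCl sem_classical unfolding X_def by blast
            then obtain y where y: "y \<in># \<Delta>" "sem \<Theta> sc v y" using V unfolding valid_def by auto
            show False
            proof (cases "isBox y")
              case True
              then obtain q where q: "y = Box q" by (auto simp: isBox_def)
              then have "boxtrue \<Theta> sc v q" using y by simp
              then obtain rs where rs: "set rs \<subseteq> \<Theta>" "sc (mdepth q) (mset (map snd rs), {#q#})"
                "\<forall>x\<in>set rs. cval v (fst x)" unfolding boxtrue_def by blast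
              have "(q, rs) \<in> Cand" using rs y q unfolding Cand_def by simp
              then have "nf (q, rs) \<in> X" unfolding X_def by blast
              then have "\<not> cval v (cf rs)" using v unfolding nf_def by auto
              then show False using rs(3) unfolding cf_def by (simp add: cval_bigconj)
            next
              case False
              then have "y \<in># Da" using y by (simp add: Da_def)
              then have "Neg y \<in> X" unfolding X_def by blast
              then have "\<not> cval v y" using v by auto
              moreover have "classical y" using \<open>y \<in># Da\<close> DaAt isAtom_classical by blast
              ultimately show False using y sem_classical by metis
            qed
          qed
          then obtain F where F: "finite F" "F \<subseteq> X" "\<not> (\<exists>v. \<forall>f\<in>F. cval v f)"
            unfolding fsat_def by blast
          have "finite (F \<inter> nf ` Cand)" "F \<inter> nf ` Cand \<subseteq> nf ` Cand" using F by auto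
          then obtain C where C: "C \<subseteq> Cand" "finite C" "F \<inter> nf ` Cand = nf ` C"
            using finite_subset_image by metis
          obtain L where L: "set L = C" using finite_list[OF C(2)] by blast
          have LC: "\<forall>(q,rs)\<in>set L. set rs \<subseteq> \<Theta> \<and> sc (mdepth q) (mset (map snd rs), {#q#})"
            using L C(1) unfolding Cand_def by auto
          define P where "P = mset (map (\<lambda>(q,rs). bigconj (map fst rs)) L) + Da"
          have clP: "\<forall>x\<in>#P. classical x"
          proof
            fix x assume "x \<in># P"
            then consider "x \<in># Da" | q rs where "(q,rs) \<in> set L" "x = bigconj (map fst rs)"
              unfolding P_def by auto
            then show "classical x"
            proof cases
              case 1 then show ?thesis using DaAt isAtom_classical by blast
            next
              case 2
              then have "set rs \<subseteq> \<Theta>" using LC by auto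
              then show ?thesis using 2 ct_fst[OF ct] by (auto intro!: classical_bigconj) blast
            qed
          qed
          have valP: "valid \<Theta> sc (\<Gamma>, P)" unfolding valid_def
          proof (intro allI impI)
            fix v assume G: "\<forall>x\<in>#fst (\<Gamma>, P). sem \<Theta> sc v x"
            show "\<exists>x\<in>#snd (\<Gamma>, P). sem \<Theta> sc v x"
            proof (rule ccontr)
              assume N: "\<not> (\<exists>x\<in>#snd (\<Gamma>, P). sem \<Theta> sc v x)"
              have NP: "\<not> cval v x" if "x \<in># P" for x
                using N that clP sem_classical by fastforce
              have "\<forall>f\<in>F. cval v f"
              proof
                fix f assume f: "f \<in> F"
                then have "f \<in> X" using F by blast
                then consider "f \<in># \<Gamma>" | "f \<in> Neg ` set_mset Da" | "f \<in> nf ` Cand" unfolding X_def by blast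
                then show "cval v f"
                proof cases
                  case 1 then show ?thesis using G GCl sem_classical by fastforce
                next
                  case 2
                  then obtain y where "y \<in># Da" "f = Neg y" by blast
                  moreover have "y \<in># P" using \<open>y \<in># Da\<close> unfolding P_def by simp
                  ultimately show ?thesis using NP by simp
                next
                  case 3
                  then have "f \<in> nf ` C" using f C(3) by blast
                  then obtain q rs where qr: "(q, rs) \<in> set L" "f = Neg (cf rs)" using L unfolding nf_def by auto
                  then have "cf rs \<in># P" unfolding P_def cf_def by force
                  then show ?thesis using NP qr by simp
                qed
              qed
              then show False using F(3) by blast
            qed
          qed
          have "nb (Box q0) \<le> nbs \<Delta>" using q0 by (rule nb_le_nbs)
          then have "nbs \<Gamma> + nbs P < nbs \<Gamma> + nbs \<Delta>" using nbs_zero[OF clP] by simp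
          then have dP: "deriv \<Theta> sc (\<lambda>_. True) False (\<Gamma>, P)" using IH valP by blast
          then have "deriv \<Theta> sc (\<lambda>_. True) False (\<Gamma>, mset (map (\<lambda>(q,rs). Box q) L) + Da)"
            using boxes[OF LC] unfolding P_def by blast
          moreover have "set_mset (mset (map (\<lambda>(q,rs). Box q) L)) \<subseteq> set_mset Bs"
            using L C(1) unfolding Cand_def Bs_def by (auto simp: isBox_def)
          ultimately have "deriv \<Theta> sc (\<lambda>_. True) False (\<Gamma>, Bs + Da)" by (rule setR)
          then show ?thesis using DBD by simp
        qed
      qed
    qed
  qed
qed




lemma ld_C: "level_deriv \<Theta> k (mset (map snd rs), {#p#}) \<Longrightarrow> level_deriv \<Theta> k (mset_set (snd ` set rs), {#p#})"
proof -
  assume a: "level_deriv \<Theta> k (mset (map snd rs), {#p#})"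
  obtain sc ok where e: "level_deriv \<Theta> k = deriv \<Theta> sc ok True" using level_deriv_eq by blast
  have "deriv \<Theta> sc ok True ({#} + mset (map snd rs), {#p#})" using a e by simp
  from ctrL[OF this] show ?thesis using e by simp
qed

lemma ld_W: "level_deriv \<Theta> k (mset_set (snd ` set rs), {#p#}) \<Longrightarrow> level_deriv \<Theta> k (mset (map snd rs), {#p#})"
proof -
  assume a: "level_deriv \<Theta> k (mset_set (snd ` set rs), {#p#})"
  obtain sc ok where e: "level_deriv \<Theta> k = deriv \<Theta> sc ok True" using level_deriv_eq by blast
  have "mset_set (set_mset (mset (map snd rs))) \<subseteq># mset (map snd rs)" by (rule mset_set_sub)
  then obtain C where C: "mset (map snd rs) = mset_set (snd ` set rs) + C"
    by (metis set_map set_mset_mset subset_mset.le_iff_add)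
  have "deriv \<Theta> sc ok True (mset_set (snd ` set rs), {#p#})" using a e by simp
  then have "deriv \<Theta> sc ok True (mset_set (snd ` set rs) + C, {#p#})" by (rule wkL)
  then show ?thesis using e C by simp
qed

theorem mainTheorem7:
  fixes \<Theta> :: "'a crule set" and \<Gamma> \<Delta> :: "'a fm multiset"
  assumes "causal_theory \<Theta>"
    and "derivable \<Theta> (\<Gamma>, \<Delta>)"
  shows "cutfree_derivable \<Theta> (\<Gamma>, \<Delta>)"
proof -
  have "valid \<Theta> (level_deriv \<Theta>) (\<Gamma>, \<Delta>)"
    using soundness[OF assms(1), of "level_deriv \<Theta>"] ld_C assms(2) unfolding derivable_def by blast
  then show ?thesis
    using completeness[OF assms(1), of "level_deriv \<Theta>"] ld_W unfolding cutfree_derivable_def by blast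
qed


end
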